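(* Let $\beta>1$ and suppose there exists $t>0$ such that the driving distance ball $\{x\in\mathbb{T}:T(\varnothing,x)\le t\}$ is finite almost surely. Then almost surely every infinite geodesic path $(\varnothing=x_0,x_1,\dots)$ satisfies $\sum_{n\ge1}T(x_{n-1},x_n)=\infty$; that is, $T(\varnothing,\partial\mathbb{T})=\infty$ almost surely.
   Context: $\mathbb{T}$ is the $3$-regular tree with graph distance $d$ and root $\varnothing$. A line is the vertex set of a bi-infinite geodesic, and $\mathbb{L}$ is the set of lines. $\mu$ is the unique automorphism-invariant Borel measure on $\mathbb{L}$ with $\mu\{\ell\ni x,y\}=2^{-d(x,y)}$ for $x\neq y$. $\Pi$ is a Poisson process on $\mathbb{L}\times(0,\infty)$ with intensity $(\beta-1)\mu\otimes v^{-\beta}\mathrm{d}v$; its atoms are roads $(\ell,v)$ with speed $v$. For an edge $e$, $V_e$ is the largest speed of a road whose line contains $e$. $T(x,y)=\sum V_e^{-1}$ over the edges $e$ of the geodesic from $x$ to $y$. $T(\varnothing,\partial\mathbb{T})$ is the infimum, over rays $(\varnothing=x_0,x_1,\dots)$, of $\sum_{n\ge1}T(x_{n-1},x_n)$. *)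

theory Defs
  imports "HOL-Probability.Probability"
begin

text \<open>Model: vertices are reduced words over the letters 0,1,2 (Cayley graph of
  the free product of three copies of Z/2); the root is the empty word and
  the neighbours of x are the words obtained by appending or deleting one letter.\<close>

definition TV :: "nat list set" where
  "TV = {xs. set xs \<subseteq> {0,1,2} \<and> (\<forall>i. Suc i < length xs \<longrightarrow> xs ! i \<noteq> xs ! Suc i)}"

definition troot :: "nat list" where "troot = []"

fun lcp :: "nat list \<Rightarrow> nat list \<Rightarrow> nat" where
  "lcp (a # xs) (b # ys) = (if a = b then Suc (lcp xs ys) else 0)"
| "lcp _ _ = 0"

definition tdist :: "nat list \<Rightarrow> nat list \<Rightarrow> nat" where
  "tdist x y = length x + length y - 2 * lcp x y"

definition geo_edges :: "nat list \<Rightarrow> nat list \<Rightarrow> nat list set set" where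
  "geo_edges x y =
     {{take k x, take (Suc k) x} | k. lcp x y \<le> k \<and> k < length x}
   \<union> {{take k y, take (Suc k) y} | k. lcp x y \<le> k \<and> k < length y}"

definition lines :: "nat list set set" where
  "lines = {range f | f :: int \<Rightarrow> nat list.
              (\<forall>i. f i \<in> TV) \<and> (\<forall>i j. tdist (f i) (f j) = nat \<bar>i - j\<bar>)}"

definition root_ray :: "(nat \<Rightarrow> nat list) \<Rightarrow> bool" where
  "root_ray x \<longleftrightarrow> x 0 = troot \<and> (\<forall>n. x n \<in> TV) \<and>
     (\<forall>i j. tdist (x i) (x j) = (if i \<le> j then j - i else i - j))"

definition tree_aut :: "(nat list \<Rightarrow> nat list) \<Rightarrow> bool" where
  "tree_aut \<phi> \<longleftrightarrow> bij_betw \<phi> TV TV \<and> (\<forall>x\<in>TV. \<forall>y\<in>TV. tdist (\<phi> x) (\<phi> y) = tdist x y)"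

definition line_sets :: "nat list set set set" where
  "line_sets = sigma_sets lines {{l \<in> lines. x \<in> l} | x. x \<in> TV}"

definition line_measure :: "nat list set measure \<Rightarrow> bool" where
  "line_measure \<mu> \<longleftrightarrow> space \<mu> = lines \<and> sets \<mu> = line_sets \<and>
     (\<forall>\<phi>. tree_aut \<phi> \<longrightarrow> (\<forall>A\<in>sets \<mu>.
         emeasure \<mu> ((\<lambda>l. \<phi> ` l) -` A \<inter> lines) = emeasure \<mu> A)) \<and>
     (\<forall>x\<in>TV. \<forall>y\<in>TV. x \<noteq> y \<longrightarrow>
         emeasure \<mu> {l \<in> lines. x \<in> l \<and> y \<in> l} = ennreal ((1/2) ^ tdist x y))"

definition road_intensity :: "nat list set measure \<Rightarrow> real \<Rightarrow> (nat list set \<times> real) measure" where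
  "road_intensity \<mu> \<beta> = density (\<mu> \<Otimes>\<^sub>M lborel)
      (\<lambda>(l, v). if 0 < v then ennreal ((\<beta> - 1) * v powr (- \<beta>)) else 0)"

definition poisson_process :: "'w measure \<Rightarrow> 's measure \<Rightarrow> ('w \<Rightarrow> 's set) \<Rightarrow> bool" where
  "poisson_process M I Roads \<longleftrightarrow> prob_space M \<and>
     (\<forall>\<omega>\<in>space M. Roads \<omega> \<subseteq> space I) \<and>
     (\<forall>A\<in>sets I. emeasure I A < \<infinity> \<longrightarrow>
        (AE \<omega> in M. finite (Roads \<omega> \<inter> A)) \<and>
        (\<forall>k::nat. measure M {\<omega> \<in> space M. card (Roads \<omega> \<inter> A) = k}
            = exp (- measure I A) * measure I A ^ k / fact k)) \<and>
     (\<forall>(n::nat) (A :: nat \<Rightarrow> 's set).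
        (\<forall>i<n. A i \<in> sets I \<and> emeasure I (A i) < \<infinity>) \<and>
        (\<forall>i<n. \<forall>j<n. i \<noteq> j \<longrightarrow> A i \<inter> A j = {}) \<longrightarrow>
        prob_space.indep_vars M (\<lambda>_. count_space (UNIV :: nat set))
           (\<lambda>i \<omega>. card (Roads \<omega> \<inter> A i)) {..<n})"

definition edge_speed :: "('w \<Rightarrow> (nat list set \<times> real) set) \<Rightarrow> 'w \<Rightarrow> nat list set \<Rightarrow> ennreal" where
  "edge_speed Roads \<omega> e = (SUP r \<in> {r \<in> Roads \<omega>. e \<subseteq> fst r}. ennreal (snd r))"

definition drive_time :: "('w \<Rightarrow> (nat list set \<times> real) set) \<Rightarrow> 'w \<Rightarrow> nat list \<Rightarrow> nat list \<Rightarrow> ennreal" where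
  "drive_time Roads \<omega> x y = (\<Sum>e\<in>geo_edges x y. inverse (edge_speed Roads \<omega> e))"

end

theory Submission
  imports Defs
begin


lemma lcp_le: "lcp x y \<le> length x" "lcp x y \<le> length y"
  by (induction x y rule: lcp.induct) auto

lemma lcp_take: "take (lcp x y) x = take (lcp x y) y"
  by (induction x y rule: lcp.induct) auto

lemma lcp_prefix[simp]: "lcp (x @ z) x = length x"
  by (induction x) auto

lemma lcp_nil[simp]: "lcp [] y = 0" "lcp x [] = 0"
  by (cases y; simp) (cases x; simp)

lemma tdist_nil[simp]: "tdist [] y = length y"
  by (simp add: tdist_def)

lemma tdist_cons_same: "tdist (a#x) (a#y) = tdist x y"
  by (simp add: tdist_def)

lemma tdist_cons_diff: "lcp x y = 0 \<Longrightarrow> tdist x y = length x + length y"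
  by (simp add: tdist_def)

lemma lcp_cons_diff: "x = [] \<or> hd x \<noteq> a \<Longrightarrow> lcp x (a#y) = 0"
  by (cases x) auto

lemma lcp_sym: "lcp x y = lcp y x"
  by (induction x y rule: lcp.induct) auto

lemma tdist_sym: "tdist x y = tdist y x"
  by (simp add: tdist_def lcp_sym)

lemma TV_Cons: "a # x \<in> TV \<longleftrightarrow> a \<in> {0,1,2} \<and> x \<in> TV \<and> (x = [] \<or> hd x \<noteq> a)"
proof
  assume h: "a # x \<in> TV"
  have s: "set (a#x) \<subseteq> {0,1,2}" and n: "\<And>i. Suc i < length (a#x) \<Longrightarrow> (a#x) ! i \<noteq> (a#x) ! Suc i"
    using h by (auto simp: TV_def)
  have "\<And>i. Suc i < length x \<Longrightarrow> x ! i \<noteq> x ! Suc i"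
    using n[of "Suc _"] by simp
  then have "x \<in> TV" using s by (auto simp: TV_def)
  moreover have "x = [] \<or> hd x \<noteq> a"
  proof (cases x)
    case (Cons b z) then show ?thesis using n[of 0] by simp
  qed simp
  ultimately show "a \<in> {0,1,2} \<and> x \<in> TV \<and> (x = [] \<or> hd x \<noteq> a)" using s by auto
next
  assume h: "a \<in> {0,1,2} \<and> x \<in> TV \<and> (x = [] \<or> hd x \<noteq> a)"
  have s: "set x \<subseteq> {0,1,2}" and n: "\<And>i. Suc i < length x \<Longrightarrow> x ! i \<noteq> x ! Suc i"
    using h by (auto simp: TV_def)
  have "\<And>i. Suc i < length (a#x) \<Longrightarrow> (a#x) ! i \<noteq> (a#x) ! Suc i"
  proof -
    fix i assume i: "Suc i < length (a#x)"
    show "(a#x) ! i \<noteq> (a#x) ! Suc i"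
    proof (cases i)
      case 0 then show ?thesis using h i by (cases x) auto
    next
      case (Suc j) then show ?thesis using n[of j] i by simp
    qed
  qed
  then show "a # x \<in> TV" using s h by (auto simp: TV_def)
qed

lemma TV_nil[simp]: "[] \<in> TV" by (simp add: TV_def)

definition phia :: "nat \<Rightarrow> nat list \<Rightarrow> nat list" where
  "phia a x = (if x \<noteq> [] \<and> hd x = a then tl x else a # x)"

lemma phia_TV: "a \<in> {0,1,2} \<Longrightarrow> x \<in> TV \<Longrightarrow> phia a x \<in> TV"
  by (cases x) (auto simp: phia_def TV_Cons)

lemma phia_inv: "a \<in> {0,1,2} \<Longrightarrow> x \<in> TV \<Longrightarrow> phia a (phia a x) = x"
  by (cases x) (auto simp: phia_def TV_Cons)

lemma phia_dist_c2:
  assumes x: "x \<in> TV" and c2: "x \<noteq> [] \<and> hd x = a" "\<not> (y \<noteq> [] \<and> hd y = a)"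
  shows "tdist (phia a x) (phia a y) = tdist x y"
proof -
  obtain x' where xe: "x = a # x'" using c2 by (cases x) auto
  have "a # x' \<in> TV" using x xe by simp
  then have "x' = [] \<or> hd x' \<noteq> a" by (simp only: TV_Cons)
  then have l1: "lcp x' (a#y) = 0" by (rule lcp_cons_diff)
  have l2: "lcp x y = 0" using c2 xe by (cases y) auto
  have "phia a x = x'" "phia a y = a # y" using c2 xe by (auto simp: phia_def)
  then show ?thesis using xe l1 l2 by (simp add: tdist_cons_diff)
qed

lemma phia_dist: "a \<in> {0,1,2} \<Longrightarrow> x \<in> TV \<Longrightarrow> y \<in> TV \<Longrightarrow> tdist (phia a x) (phia a y) = tdist x y"
proof -
  assume a: "a \<in> {0,1,2}" and x: "x \<in> TV" and y: "y \<in> TV"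
  consider (c1) "x \<noteq> [] \<and> hd x = a" "y \<noteq> [] \<and> hd y = a"
    | (c2) "x \<noteq> [] \<and> hd x = a" "\<not> (y \<noteq> [] \<and> hd y = a)"
    | (c3) "\<not> (x \<noteq> [] \<and> hd x = a)" "y \<noteq> [] \<and> hd y = a"
    | (c4) "\<not> (x \<noteq> [] \<and> hd x = a)" "\<not> (y \<noteq> [] \<and> hd y = a)" by blast
  then show ?thesis
  proof cases
    case c1
    then obtain x' y' where xe: "x = a # x'" and ye: "y = a # y'" by (cases x; cases y) auto
    have "phia a x = x'" "phia a y = y'" using xe ye by (auto simp: phia_def)
    then show ?thesis using xe ye by (simp only: tdist_cons_same)
  next
    case c2 then show ?thesis using x phia_dist_c2 by blast
  next
    case c3
    have "tdist (phia a y) (phia a x) = tdist y x" using y c3 by (intro phia_dist_c2) auto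
    then show ?thesis by (simp add: tdist_sym)
  next
    case c4
    then have "phia a x = a # x" "phia a y = a # y" by (auto simp: phia_def)
    then show ?thesis by (simp only: tdist_cons_same)
  qed
qed

lemma phia_aut: "a \<in> {0,1,2} \<Longrightarrow> tree_aut (phia a)"
  unfolding tree_aut_def
proof (intro conjI ballI)
  assume a: "a \<in> {0,1,2}"
  show "bij_betw (phia a) TV TV"
    by (rule bij_betw_byWitness[where f'="phia a"]) (use a phia_TV phia_inv in auto)
  fix x y assume "x \<in> TV" "y \<in> TV"
  then show "tdist (phia a x) (phia a y) = tdist x y" using a phia_dist by blast
qed

lemma tree_aut_comp: "tree_aut f \<Longrightarrow> tree_aut g \<Longrightarrow> tree_aut (f \<circ> g)"
  unfolding tree_aut_def
proof (intro conjI ballI)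
  assume f: "bij_betw f TV TV \<and> (\<forall>x\<in>TV. \<forall>y\<in>TV. tdist (f x) (f y) = tdist x y)"
    and g: "bij_betw g TV TV \<and> (\<forall>x\<in>TV. \<forall>y\<in>TV. tdist (g x) (g y) = tdist x y)"
  show "bij_betw (f \<circ> g) TV TV" using f g bij_betw_trans by blast
  fix x y assume x: "x \<in> TV" and y: "y \<in> TV"
  have "g x \<in> TV" "g y \<in> TV" using g x y bij_betwE by blast+
  then show "tdist ((f \<circ> g) x) ((f \<circ> g) y) = tdist x y" using f g x y by simp
qed

fun phi :: "nat list \<Rightarrow> nat list \<Rightarrow> nat list" where
  "phi [] = id"
| "phi (a # u) = phia a \<circ> phi u"

lemma phi_aut: "set u \<subseteq> {0,1,2} \<Longrightarrow> tree_aut (phi u)"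
proof (induction u)
  case Nil
  have "bij_betw (\<lambda>x. x) TV TV" using bij_betw_id[of TV] by (simp add: id_def)
  then show ?case by (simp add: tree_aut_def)
next
  case (Cons a u)
  then have "tree_aut (phia a)" "tree_aut (phi u)" by (auto intro: phia_aut)
  then show ?case unfolding phi.simps by (rule tree_aut_comp)
qed

lemma phi_append: "phi (u @ v) = phi u \<circ> phi v"
  by (induction u) auto

lemma TV_appendD: "u @ w \<in> TV \<Longrightarrow> w \<in> TV \<and> u \<in> TV"
proof (induction u)
  case (Cons a u)
  then have "u @ w \<in> TV" "a \<in> {0,1,2}" "u @ w = [] \<or> hd (u @ w) \<noteq> a" by (simp_all only: append_Cons TV_Cons)
  then show ?case using Cons.IH by (cases u) (auto simp: TV_Cons)
qed simp

lemma psi_app: "u @ w \<in> TV \<Longrightarrow> phi (rev u) (u @ w) = w"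
proof (induction u)
  case Nil then show ?case by simp
next
  case (Cons a u)
  then have "u @ w \<in> TV" by (simp add: TV_Cons)
  then show ?case using Cons by (simp add: phi_append phia_def)
qed

lemma TV_set: "u \<in> TV \<Longrightarrow> set u \<subseteq> {0,1,2}"
  by (auto simp: TV_def)


lemma lcp_prefix2[simp]: "lcp x (x @ z) = length x"
  using lcp_prefix lcp_sym by metis

lemma edge_inj:
  assumes "{take k y, take (Suc k) y} = {take j y, take (Suc j) y}" "k < length y" "j < length y"
  shows "k = j"
proof -
  have "length ` {take k y, take (Suc k) y} = length ` {take j y, take (Suc j) y}" using assms(1) by simp
  moreover have "length (take k y) = k" "length (take (Suc k) y) = Suc k"
    "length (take j y) = j" "length (take (Suc j) y) = Suc j" using assms(2,3) by auto
  ultimately have "{k, Suc k} = {j, Suc j}" by (simp only: image_insert image_empty)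
  then have "k \<in> {j, Suc j}" "j \<in> {k, Suc k}" by blast+
  then show ?thesis by auto
qed

lemma geo_edges_prefix:
  "geo_edges x (x @ z) = (\<lambda>k. {take k (x@z), take (Suc k) (x@z)}) ` {length x..<length (x@z)}"
  unfolding geo_edges_def by auto

lemma drive_time_prefix:
  "drive_time R \<omega> x (x @ z) = (\<Sum>k\<in>{length x..<length (x@z)}. inverse (edge_speed R \<omega> {take k (x@z), take (Suc k) (x@z)}))"
proof -
  have inj: "inj_on (\<lambda>k. {take k (x@z), take (Suc k) (x@z)}) {length x..<length (x@z)}"
  proof (rule inj_onI)
    fix a b assume "a \<in> {length x..<length (x@z)}" "b \<in> {length x..<length (x@z)}"
      "{take a (x@z), take (Suc a) (x@z)} = {take b (x@z), take (Suc b) (x@z)}"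
    then show "a = b" using edge_inj[of a "x@z" b] by simp
  qed
  show ?thesis
    using sum.reindex[OF inj, of "\<lambda>e. inverse (edge_speed R \<omega> e)"] unfolding drive_time_def geo_edges_prefix
    by (simp only: comp_def)
qed

lemma drive_time_root:
  "drive_time R \<omega> [] w = (\<Sum>k<length w. inverse (edge_speed R \<omega> {take k w, take (Suc k) w}))"
  using drive_time_prefix[of R \<omega> "[]" w] by (simp add: lessThan_atLeast0)

lemma ray_len: "root_ray x \<Longrightarrow> length (x n) = n"
  unfolding root_ray_def troot_def by (metis le0 minus_nat.diff_0 tdist_nil)

lemma ray_prefix:
  assumes r: "root_ray x" and nm: "n \<le> m"
  shows "x n = take n (x m)"
proof -
  have d: "tdist (x n) (x m) = m - n" using r nm unfolding root_ray_def by simp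
  have l: "length (x n) = n" "length (x m) = m" using r ray_len by auto
  have "lcp (x n) (x m) \<le> n" using lcp_le(1)[of "x n" "x m"] l by simp
  then have "lcp (x n) (x m) = n" using d l nm unfolding tdist_def by linarith
  then have "take n (x n) = take n (x m)" using lcp_take by metis
  then show ?thesis using l by simp
qed

lemma ray_TV: "root_ray x \<Longrightarrow> x n \<in> TV"
  unfolding root_ray_def by simp

lemma ray_step:
  assumes r: "root_ray x" and nm: "n \<le> m"
  shows "x m = x n @ drop n (x m)"
  using ray_prefix[OF r nm] by (metis append_take_drop_id)

lemma ray_drive:
  assumes r: "root_ray x" and nm: "n \<le> m"
  shows "drive_time R \<omega> (x n) (x m) = (\<Sum>k\<in>{n..<m}. inverse (edge_speed R \<omega> {x k, x (Suc k)}))"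
proof -
  have "drive_time R \<omega> (x n) (x m) = drive_time R \<omega> (x n) (x n @ drop n (x m))"
    using ray_step[OF r nm] by simp
  also have "\<dots> = (\<Sum>k\<in>{n..<m}. inverse (edge_speed R \<omega> {take k (x m), take (Suc k) (x m)}))"
    using drive_time_prefix[of R \<omega> "x n" "drop n (x m)"] ray_step[OF r nm] ray_len[OF r]
    by simp
  also have "\<dots> = (\<Sum>k\<in>{n..<m}. inverse (edge_speed R \<omega> {x k, x (Suc k)}))"
  proof (rule sum.cong)
    fix k assume "k \<in> {n..<m}"
    then have "x k = take k (x m)" "x (Suc k) = take (Suc k) (x m)" using ray_prefix[OF r] by auto
    then show "inverse (edge_speed R \<omega> {take k (x m), take (Suc k) (x m)}) = inverse (edge_speed R \<omega> {x k, x (Suc k)})"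
      by simp
  qed simp
  finally show ?thesis .
qed


abbreviation CNT :: "nat measure" where "CNT \<equiv> count_space UNIV"

lemma pp_prob: "poisson_process M I R \<Longrightarrow> prob_space M"
  unfolding poisson_process_def by simp

lemma pp_indep:
  fixes n :: nat
  assumes pp: "poisson_process M I R"
    and a1: "\<forall>i<n. A i \<in> sets I \<and> emeasure I (A i) < \<infinity>"
    and a2: "\<forall>i<n. \<forall>j<n. i \<noteq> j \<longrightarrow> A i \<inter> A j = {}"
  shows "prob_space.indep_vars M (\<lambda>_. CNT) (\<lambda>i \<omega>. card (R \<omega> \<inter> A i)) {..<n}"
proof -
  have h: "\<forall>(n::nat) (A :: nat \<Rightarrow> _ set).
        (\<forall>i<n. A i \<in> sets I \<and> emeasure I (A i) < \<infinity>) \<and>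
        (\<forall>i<n. \<forall>j<n. i \<noteq> j \<longrightarrow> A i \<inter> A j = {}) \<longrightarrow>
        prob_space.indep_vars M (\<lambda>_. CNT)
           (\<lambda>i \<omega>. card (R \<omega> \<inter> A i)) {..<n}"
    using pp unfolding poisson_process_def by (elim conjE)
  show ?thesis using h[rule_format, of n A] a1 a2 by simp
qed

lemma pp_rv:
  assumes pp: "poisson_process M I R" and A: "A \<in> sets I" "emeasure I A < \<infinity>"
  shows "(\<lambda>\<omega>. card (R \<omega> \<inter> A)) \<in> measurable M CNT"
proof -
  interpret prob_space M using pp_prob[OF pp] .
  have "indep_vars (\<lambda>_. CNT) (\<lambda>i \<omega>. card (R \<omega> \<inter> (\<lambda>_. A) i)) {..<1::nat}"
    using pp_indep[OF pp, of 1 "\<lambda>_. A"] A by (simp add: One_nat_def)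
  then show ?thesis unfolding indep_vars_def by auto
qed

lemma pp_main:
  assumes pp: "poisson_process M I R" and A: "A \<in> sets I" "emeasure I A < \<infinity>"
  shows "(AE \<omega> in M. finite (R \<omega> \<inter> A)) \<and>
        (\<forall>k::nat. measure M {\<omega> \<in> space M. card (R \<omega> \<inter> A) = k}
            = exp (- measure I A) * measure I A ^ k / fact k)"
proof -
  have h: "\<forall>A\<in>sets I. emeasure I A < \<infinity> \<longrightarrow>
        (AE \<omega> in M. finite (R \<omega> \<inter> A)) \<and>
        (\<forall>k::nat. measure M {\<omega> \<in> space M. card (R \<omega> \<inter> A) = k}
            = exp (- measure I A) * measure I A ^ k / fact k)"
    using pp unfolding poisson_process_def by (elim conjE)
  show ?thesis using h A by simp
qed

lemma pp_finite:
  assumes pp: "poisson_process M I R" and A: "A \<in> sets I" "emeasure I A < \<infinity>"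
  shows "AE \<omega> in M. finite (R \<omega> \<inter> A)"
  using pp_main[OF assms] by simp

lemma pp_prob_k:
  assumes pp: "poisson_process M I R" and A: "A \<in> sets I" "emeasure I A < \<infinity>"
  shows "measure M {\<omega> \<in> space M. card (R \<omega> \<inter> A) = k} = exp (- measure I A) * measure I A ^ k / fact k"
  using pp_main[OF assms] by simp

lemma pp_marginal:
  assumes pp: "poisson_process M I R" and pp': "poisson_process M I R'"
    and A: "A \<in> sets I" "emeasure I A < \<infinity>"
  shows "distr M CNT (\<lambda>\<omega>. card (R \<omega> \<inter> A)) = distr M CNT (\<lambda>\<omega>. card (R' \<omega> \<inter> A))"
proof (rule measure_eqI_countable[where A=UNIV])
  interpret prob_space M using pp_prob[OF pp] .
  fix k :: nat
  have m: "(\<lambda>\<omega>. card (R \<omega> \<inter> A)) \<in> measurable M CNT" "(\<lambda>\<omega>. card (R' \<omega> \<inter> A)) \<in> measurable M CNT"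
    using pp_rv[OF pp A] pp_rv[OF pp' A] by auto
  have "emeasure (distr M CNT (\<lambda>\<omega>. card (R \<omega> \<inter> A))) {k} = emeasure M {\<omega> \<in> space M. card (R \<omega> \<inter> A) = k}"
    using m by (subst emeasure_distr) (auto intro!: arg_cong[where f="emeasure M"])
  also have "\<dots> = ennreal (measure M {\<omega> \<in> space M. card (R \<omega> \<inter> A) = k})"
    by (rule emeasure_eq_measure)
  also have "\<dots> = ennreal (measure M {\<omega> \<in> space M. card (R' \<omega> \<inter> A) = k})"
    using pp_prob_k[OF pp A] pp_prob_k[OF pp' A] by simp
  also have "\<dots> = emeasure M {\<omega> \<in> space M. card (R' \<omega> \<inter> A) = k}"
    by (rule emeasure_eq_measure[symmetric])
  also have "\<dots> = emeasure (distr M CNT (\<lambda>\<omega>. card (R' \<omega> \<inter> A))) {k}"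
    using m by (subst emeasure_distr) (auto intro!: arg_cong[where f="emeasure M"])
  finally show "emeasure (distr M CNT (\<lambda>\<omega>. card (R \<omega> \<inter> A))) {k} = emeasure (distr M CNT (\<lambda>\<omega>. card (R' \<omega> \<inter> A))) {k}" .
qed auto

lemma discrete_PiM_sets:
  assumes fin: "finite J" and X: "X \<subseteq> space (PiM J (\<lambda>_. CNT))"
  shows "X \<in> sets (PiM J (\<lambda>_. CNT))"
proof -
  have sp: "space (PiM J (\<lambda>_. CNT)) = PiE J (\<lambda>_. UNIV)" by (simp add: space_PiM)
  have "countable (PiE J (\<lambda>_. UNIV :: nat set))" using fin by (intro countable_PiE) auto
  then have cX: "countable X" using X sp countable_subset by metis
  have single: "{c} \<in> sets (PiM J (\<lambda>_. CNT))" if "c \<in> X" for c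
  proof -
    have c: "c \<in> PiE J (\<lambda>_. UNIV)" using that X sp by auto
    have "{c} = PiE J (\<lambda>j. {c j})"
      using c by (auto simp: PiE_iff extensional_def fun_eq_iff) metis
    also have "\<dots> \<in> sets (PiM J (\<lambda>_. CNT))" using fin by (intro sets_PiM_I_finite) auto
    finally show ?thesis .
  qed
  have "X = (\<Union>c\<in>X. {c})" by auto
  also have "\<dots> \<in> sets (PiM J (\<lambda>_. CNT))" using cX single by (intro sets.countable_UN') auto
  finally show ?thesis .
qed

lemma discrete_PiM_measurable:
  assumes fin: "finite J" and f: "f \<in> space (PiM J (\<lambda>_. CNT)) \<rightarrow> space N"
  shows "f \<in> measurable (PiM J (\<lambda>_. CNT)) N"
  using f by (intro measurableI discrete_PiM_sets fin) auto

lemma pp_fdd: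
  fixes k :: nat and A :: "nat \<Rightarrow> 's set" and I :: "'s measure"
  assumes pp: "poisson_process M I R" and pp': "poisson_process M I R'"
    and A: "\<forall>i<k. A i \<in> sets I \<and> emeasure I (A i) < \<infinity>"
  shows "distr M (PiM {..<k} (\<lambda>_. CNT)) (\<lambda>\<omega>. \<lambda>i\<in>{..<k}. card (R \<omega> \<inter> A i))
       = distr M (PiM {..<k} (\<lambda>_. CNT)) (\<lambda>\<omega>. \<lambda>i\<in>{..<k}. card (R' \<omega> \<inter> A i))"
proof -
  interpret prob_space M using pp_prob[OF pp] .
  obtain h where h: "bij_betw h {0..<card (Pow {..<k})} (Pow {..<k})"
    using ex_bij_betw_nat_finite[of "Pow {..<k}"] by auto
  define n where "n = card (Pow {..<k})"
  have h': "bij_betw h {..<n} (Pow {..<k})" using h unfolding n_def by (simp add: atLeast0LessThan)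
  have himg: "h ` {..<n} = Pow {..<k}" and hinj: "inj_on h {..<n}" using h' by (simp_all add: bij_betw_def)
  have n1: "{..<n} \<noteq> {}"
  proof -
    have "{} \<in> h ` {..<n}" by (simp add: himg)
    then show ?thesis by auto
  qed
  define B where "B j = {p \<in> space I. (\<exists>i<k. p \<in> A i) \<and> (\<forall>i<k. p \<in> A i \<longleftrightarrow> i \<in> h j)}" for j
  have Ai: "A i \<in> sets I" "emeasure I (A i) < \<infinity>" if "i < k" for i using A that by auto
  have hsub: "h j \<subseteq> {..<k}" if "j < n" for j
  proof -
    have "h j \<in> h ` {..<n}" using that by simp
    then show ?thesis by (simp add: himg)
  qed
  have Bsets: "B j \<in> sets I" if "j < n" for j
  proof -
    define C where "C i = (if i = k then space I else if i \<in> h j then A i else space I - A i)" for i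
    have "B j = (\<Union>i<k. A i) \<inter> (\<Inter>i\<in>{..k}. C i)"
    proof (intro equalityI subsetI)
      fix p assume p: "p \<in> B j"
      then have p1: "p \<in> space I" "\<exists>i<k. p \<in> A i" "\<And>i. i < k \<Longrightarrow> p \<in> A i \<longleftrightarrow> i \<in> h j"
        unfolding B_def by auto
      have "p \<in> C i" if "i \<in> {..k}" for i
      proof (cases "i = k")
        case False
        then have "i < k" using that by auto
        then show ?thesis using p1 False unfolding C_def by auto
      qed (use p1 C_def in auto)
      then show "p \<in> (\<Union>i<k. A i) \<inter> (\<Inter>i\<in>{..k}. C i)" using p1 by auto
    next
      fix p assume p: "p \<in> (\<Union>i<k. A i) \<inter> (\<Inter>i\<in>{..k}. C i)"
      then have "p \<in> C k" by auto
      then have sp: "p \<in> space I" unfolding C_def by simp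
      have "p \<in> A i \<longleftrightarrow> i \<in> h j" if ik: "i < k" for i
      proof -
        have "p \<in> C i" using p ik by auto
        then show ?thesis using ik unfolding C_def by (auto split: if_splits)
      qed
      then show "p \<in> B j" using p sp unfolding B_def by auto
    qed
    also have "\<dots> \<in> sets I"
      using Ai unfolding C_def by (intro sets.Int sets.finite_UN sets.finite_INT) auto
    finally show ?thesis .
  qed
  have Bfin: "emeasure I (B j) < \<infinity>" if "j < n" for j
  proof (cases "h j = {}")
    case True
    then have "B j = {}" unfolding B_def by auto
    then show ?thesis by simp
  next
    case False
    then obtain i where i: "i \<in> h j" by auto
    then have ik: "i < k" using hsub[OF that] by auto
    have "B j \<subseteq> A i" using i ik unfolding B_def by auto
    then have "emeasure I (B j) \<le> emeasure I (A i)" using Ai[OF ik] by (intro emeasure_mono) auto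
    then show ?thesis using Ai[OF ik] by (simp add: le_less_trans)
  qed
  have Bdisj: "B j \<inter> B j' = {}" if "j < n" "j' < n" "j \<noteq> j'" for j j'
  proof (rule ccontr)
    assume "B j \<inter> B j' \<noteq> {}"
    then obtain p where "p \<in> B j" "p \<in> B j'" by auto
    then have "\<forall>i<k. i \<in> h j \<longleftrightarrow> i \<in> h j'" unfolding B_def by auto
    then have "h j = h j'" using hsub that by blast
    then show False using inj_onD[OF hinj, of j j'] that by simp
  qed
  have Acover: "A i = (\<Union>j\<in>{j. j < n \<and> i \<in> h j}. B j)" if ik: "i < k" for i
  proof
    show "A i \<subseteq> (\<Union>j\<in>{j. j < n \<and> i \<in> h j}. B j)"
    proof
      fix p assume p: "p \<in> A i"
      have "{i. i < k \<and> p \<in> A i} \<in> Pow {..<k}" by auto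
      then have "{i. i < k \<and> p \<in> A i} \<in> h ` {..<n}" by (simp add: himg)
      then obtain j where j: "j < n" "h j = {i. i < k \<and> p \<in> A i}" by auto
      have "p \<in> space I" using p Ai[OF ik] sets.sets_into_space by blast
      then have "p \<in> B j" using j p ik unfolding B_def by auto
      then show "p \<in> (\<Union>j\<in>{j. j < n \<and> i \<in> h j}. B j)" using j p ik by auto
    qed
    show "(\<Union>j\<in>{j. j < n \<and> i \<in> h j}. B j) \<subseteq> A i"
      using ik unfolding B_def by auto
  qed
  have key: "distr M (PiM {..<k} (\<lambda>_. CNT)) (\<lambda>\<omega>. \<lambda>i\<in>{..<k}. card (Q \<omega> \<inter> A i))
     = distr (PiM {..<n} (\<lambda>j. distr M CNT (\<lambda>\<omega>. card (Q \<omega> \<inter> B j)))) (PiM {..<k} (\<lambda>_. CNT))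
          (\<lambda>c. \<lambda>i\<in>{..<k}. \<Sum>j\<in>{j. j < n \<and> i \<in> h j}. c j)"
    if ppQ: "poisson_process M I Q" for Q
  proof -
    define X where "X = (\<lambda>\<omega>. \<lambda>j\<in>{..<n}. card (Q \<omega> \<inter> B j))"
    define G where "G = (\<lambda>c::nat \<Rightarrow> nat. \<lambda>i\<in>{..<k}. \<Sum>j\<in>{j. j < n \<and> i \<in> h j}. c j)"
    have Xm: "X \<in> measurable M (PiM {..<n} (\<lambda>_. CNT))"
      unfolding X_def using pp_rv[OF ppQ Bsets Bfin] by (intro measurable_restrict) auto
    have Gm: "G \<in> measurable (PiM {..<n} (\<lambda>_. CNT)) (PiM {..<k} (\<lambda>_. CNT))"
      unfolding G_def by (intro discrete_PiM_measurable) (auto simp: space_PiM)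
    have Am: "(\<lambda>\<omega>. \<lambda>i\<in>{..<k}. card (Q \<omega> \<inter> A i)) \<in> measurable M (PiM {..<k} (\<lambda>_. CNT))"
      using pp_rv[OF ppQ] Ai by (intro measurable_restrict) auto
    have ind: "indep_vars (\<lambda>_. CNT) (\<lambda>j \<omega>. card (Q \<omega> \<inter> B j)) {..<n}"
      using pp_indep[OF ppQ, of n B] Bsets Bfin Bdisj by auto
    have dX: "distr M (PiM {..<n} (\<lambda>_. CNT)) X = PiM {..<n} (\<lambda>j. distr M CNT (\<lambda>\<omega>. card (Q \<omega> \<inter> B j)))"
      unfolding X_def using ind n1 pp_rv[OF ppQ Bsets Bfin]
      by (subst indep_vars_iff_distr_eq_PiM'[symmetric]) auto
    have fin: "AE \<omega> in M. \<forall>i\<in>{..<k}. finite (Q \<omega> \<inter> A i)"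
      using pp_finite[OF ppQ] Ai by (intro eventually_ball_finite) auto
    have ae: "AE \<omega> in M. (\<lambda>i\<in>{..<k}. card (Q \<omega> \<inter> A i)) = G (X \<omega>)"
      using fin
    proof eventually_elim
      case (elim \<omega>)
      show ?case unfolding G_def X_def
      proof (rule restrict_ext)
        fix i assume ik: "i \<in> {..<k}"
        have "Q \<omega> \<inter> A i = (\<Union>j\<in>{j. j < n \<and> i \<in> h j}. Q \<omega> \<inter> B j)"
          using Acover[of i] ik by auto
        also have "card \<dots> = (\<Sum>j\<in>{j. j < n \<and> i \<in> h j}. card (Q \<omega> \<inter> B j))"
        proof (rule card_UN_disjoint)
          show "\<forall>j\<in>{j. j < n \<and> i \<in> h j}. finite (Q \<omega> \<inter> B j)"
          proof
            fix j assume j: "j \<in> {j. j < n \<and> i \<in> h j}"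
            have "B j \<subseteq> A i" using Acover[of i] ik j by auto
            then have "Q \<omega> \<inter> B j \<subseteq> Q \<omega> \<inter> A i" by auto
            moreover have "finite (Q \<omega> \<inter> A i)" using elim ik by auto
            ultimately show "finite (Q \<omega> \<inter> B j)" by (rule finite_subset)
          qed
          show "\<forall>j\<in>{j. j < n \<and> i \<in> h j}. \<forall>j'\<in>{j. j < n \<and> i \<in> h j}. j \<noteq> j' \<longrightarrow> Q \<omega> \<inter> B j \<inter> (Q \<omega> \<inter> B j') = {}"
            using Bdisj by blast
        qed auto
        finally show "card (Q \<omega> \<inter> A i) = (\<Sum>j\<in>{j. j < n \<and> i \<in> h j}. (\<lambda>j\<in>{..<n}. card (Q \<omega> \<inter> B j)) j)"
          by simp
      qed
    qed
    have "distr M (PiM {..<k} (\<lambda>_. CNT)) (\<lambda>\<omega>. \<lambda>i\<in>{..<k}. card (Q \<omega> \<inter> A i))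
        = distr M (PiM {..<k} (\<lambda>_. CNT)) (G \<circ> X)"
      using ae Am Gm Xm by (intro distr_cong_AE) auto
    also have "\<dots> = distr (distr M (PiM {..<n} (\<lambda>_. CNT)) X) (PiM {..<k} (\<lambda>_. CNT)) G"
      using Gm Xm by (simp add: distr_distr)
    finally show ?thesis unfolding dX G_def .
  qed
  have marg: "PiM {..<n} (\<lambda>j. distr M CNT (\<lambda>\<omega>. card (R \<omega> \<inter> B j))) = PiM {..<n} (\<lambda>j. distr M CNT (\<lambda>\<omega>. card (R' \<omega> \<inter> B j)))"
    using pp_marginal[OF pp pp' Bsets Bfin] by (intro PiM_cong) auto
  show ?thesis unfolding key[OF pp] key[OF pp'] marg ..
qed

lemma pp_law:
  fixes J :: "'i set" and A :: "'i \<Rightarrow> 's set" and I :: "'s measure"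
  assumes pp: "poisson_process M I R" and pp': "poisson_process M I R'"
    and A: "\<forall>i\<in>J. A i \<in> sets I \<and> emeasure I (A i) < \<infinity>"
  shows "distr M (PiM J (\<lambda>_. CNT)) (\<lambda>\<omega>. \<lambda>i\<in>J. card (R \<omega> \<inter> A i))
       = distr M (PiM J (\<lambda>_. CNT)) (\<lambda>\<omega>. \<lambda>i\<in>J. card (R' \<omega> \<inter> A i))"
proof (rule measure_eqI_PiM_infinite)
  interpret prob_space M using pp_prob[OF pp] .
  show "sets (distr M (PiM J (\<lambda>_. CNT)) (\<lambda>\<omega>. \<lambda>i\<in>J. card (R \<omega> \<inter> A i))) = sets (PiM J (\<lambda>_. CNT))"
    by simp
  show "sets (distr M (PiM J (\<lambda>_. CNT)) (\<lambda>\<omega>. \<lambda>i\<in>J. card (R' \<omega> \<inter> A i))) = sets (PiM J (\<lambda>_. CNT))"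
    by simp
  have "prob_space (distr M (PiM J (\<lambda>_. CNT)) (\<lambda>\<omega>. \<lambda>i\<in>J. card (R \<omega> \<inter> A i)))"
    using pp_rv[OF pp] A by (intro prob_space_distr measurable_restrict) auto
  then show "finite_measure (distr M (PiM J (\<lambda>_. CNT)) (\<lambda>\<omega>. \<lambda>i\<in>J. card (R \<omega> \<inter> A i)))"
    by (simp add: prob_space_def)
  fix E K assume K: "finite K" "K \<subseteq> J" and E: "\<And>i. i \<in> K \<Longrightarrow> E i \<in> sets CNT"
  obtain g where g: "bij_betw g {0..<card K} K" using ex_bij_betw_nat_finite[OF K(1)] by auto
  define m where "m = card K"
  have g': "bij_betw g {..<m} K" using g unfolding m_def by (simp add: atLeast0LessThan)
  have gK: "g l \<in> K" if "l < m" for l using g' that bij_betwE by blast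
  have gs: "g ` {..<m} = K" using g' by (simp add: bij_betw_def)
  have eq: "emeasure (distr M (PiM J (\<lambda>_. CNT)) (\<lambda>\<omega>. \<lambda>i\<in>J. card (Q \<omega> \<inter> A i))) (prod_emb J (\<lambda>_. CNT) K (PiE K E))
     = emeasure (distr M (PiM {..<m} (\<lambda>_. CNT)) (\<lambda>\<omega>. \<lambda>l\<in>{..<m}. card (Q \<omega> \<inter> A (g l)))) (PiE {..<m} (\<lambda>l. E (g l)))"
    if ppQ: "poisson_process M I Q" for Q
  proof -
    have m1: "(\<lambda>\<omega>. \<lambda>i\<in>J. card (Q \<omega> \<inter> A i)) \<in> measurable M (PiM J (\<lambda>_. CNT))"
      using pp_rv[OF ppQ] A by (intro measurable_restrict) auto
    have m2: "(\<lambda>\<omega>. \<lambda>l\<in>{..<m}. card (Q \<omega> \<inter> A (g l))) \<in> measurable M (PiM {..<m} (\<lambda>_. CNT))"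
      using pp_rv[OF ppQ] A gK K(2) by (intro measurable_restrict) auto
    have s1: "prod_emb J (\<lambda>_. CNT) K (PiE K E) \<in> sets (PiM J (\<lambda>_. CNT))"
      using K E by (intro sets_PiM_I) auto
    have s2: "PiE {..<m} (\<lambda>l. E (g l)) \<in> sets (PiM {..<m} (\<lambda>_. CNT))"
      by (intro sets_PiM_I_finite) auto
    have "(\<lambda>\<omega>. \<lambda>i\<in>J. card (Q \<omega> \<inter> A i)) -` prod_emb J (\<lambda>_. CNT) K (PiE K E) \<inter> space M
        = (\<lambda>\<omega>. \<lambda>l\<in>{..<m}. card (Q \<omega> \<inter> A (g l))) -` PiE {..<m} (\<lambda>l. E (g l)) \<inter> space M"
    proof -
      have "(\<lambda>i\<in>J. card (Q \<omega> \<inter> A i)) \<in> prod_emb J (\<lambda>_. CNT) K (PiE K E) \<longleftrightarrow> (\<forall>i\<in>K. card (Q \<omega> \<inter> A i) \<in> E i)" for \<omega>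
        using K(2) by (auto simp: prod_emb_iff PiE_iff extensional_def)
      moreover have "(\<lambda>l\<in>{..<m}. card (Q \<omega> \<inter> A (g l))) \<in> PiE {..<m} (\<lambda>l. E (g l)) \<longleftrightarrow> (\<forall>i\<in>K. card (Q \<omega> \<inter> A i) \<in> E i)" for \<omega>
      proof -
        have "(\<lambda>l\<in>{..<m}. card (Q \<omega> \<inter> A (g l))) \<in> PiE {..<m} (\<lambda>l. E (g l)) \<longleftrightarrow> (\<forall>l<m. card (Q \<omega> \<inter> A (g l)) \<in> E (g l))"
          by (auto simp: PiE_iff)
        also have "\<dots> \<longleftrightarrow> (\<forall>i\<in>g ` {..<m}. card (Q \<omega> \<inter> A i) \<in> E i)" by auto
        finally show ?thesis unfolding gs .
      qed
      ultimately show ?thesis by auto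
    qed
    then show ?thesis using m1 m2 s1 s2 by (simp add: emeasure_distr)
  qed
  have fdd: "distr M (PiM {..<m} (\<lambda>_. CNT)) (\<lambda>\<omega>. \<lambda>l\<in>{..<m}. card (R \<omega> \<inter> A (g l)))
     = distr M (PiM {..<m} (\<lambda>_. CNT)) (\<lambda>\<omega>. \<lambda>l\<in>{..<m}. card (R' \<omega> \<inter> A (g l)))"
    using pp_fdd[OF pp pp', of m "\<lambda>l. A (g l)"] A gK K(2) by auto
  show "emeasure (distr M (PiM J (\<lambda>_. CNT)) (\<lambda>\<omega>. \<lambda>i\<in>J. card (R \<omega> \<inter> A i))) (prod_emb J (\<lambda>_. CNT) K (PiE K E))
     = emeasure (distr M (PiM J (\<lambda>_. CNT)) (\<lambda>\<omega>. \<lambda>i\<in>J. card (R' \<omega> \<inter> A i))) (prod_emb J (\<lambda>_. CNT) K (PiE K E))"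
    unfolding eq[OF pp] eq[OF pp'] fdd ..
qed


lemma lines_sub: "l \<in> lines \<Longrightarrow> l \<subseteq> TV"
  unfolding lines_def by auto

lemma lm_space: "line_measure \<mu> \<Longrightarrow> space \<mu> = lines"
  unfolding line_measure_def by simp

lemma lm_sets: "line_measure \<mu> \<Longrightarrow> sets \<mu> = line_sets"
  unfolding line_measure_def by simp

lemma lm_Lx: assumes lm: "line_measure \<mu>" shows "{l \<in> lines. x \<in> l} \<in> sets \<mu>"
proof (cases "x \<in> TV")
  case True
  then have "{l \<in> lines. x \<in> l} \<in> line_sets" unfolding line_sets_def by (intro sigma_sets.Basic) auto
  then show ?thesis using lm_sets[OF lm] by simp
next
  case False
  then have e: "{l \<in> lines. x \<in> l} = {}" using lines_sub by auto
  show ?thesis unfolding e by simp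
qed

lemma lm_L2: assumes lm: "line_measure \<mu>" shows "{l \<in> lines. x \<in> l \<and> y \<in> l} \<in> sets \<mu>"
proof -
  have "{l \<in> lines. x \<in> l \<and> y \<in> l} = {l \<in> lines. x \<in> l} \<inter> {l \<in> lines. y \<in> l}" by auto
  then show ?thesis using lm_Lx[OF lm, of x] lm_Lx[OF lm, of y] by auto
qed

lemma RI_space: "line_measure \<mu> \<Longrightarrow> space (road_intensity \<mu> \<beta>) = lines \<times> UNIV"
  unfolding road_intensity_def by (simp add: space_pair_measure lm_space)

lemma RI_sets: "sets (road_intensity \<mu> \<beta>) = sets (\<mu> \<Otimes>\<^sub>M lborel)"
  unfolding road_intensity_def by simp

definition dens :: "real \<Rightarrow> nat list set \<times> real \<Rightarrow> ennreal" where
  "dens \<beta> = (\<lambda>(l, v). if 0 < v then ennreal ((\<beta> - 1) * v powr (- \<beta>)) else 0)"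

lemma RI_def2: "road_intensity \<mu> \<beta> = density (\<mu> \<Otimes>\<^sub>M lborel) (dens \<beta>)"
  unfolding road_intensity_def dens_def ..

lemma dens_meas[measurable]: "dens \<beta> \<in> borel_measurable (\<mu> \<Otimes>\<^sub>M lborel)"
  unfolding dens_def by measurable

lemma tail_integral_fin:
  assumes b: "\<beta> > 1" and q: "q > 0"
  shows "(\<integral>\<^sup>+ v. dens \<beta> (l, v) * indicator {q<..} v \<partial>lborel) < \<infinity>"
proof -
  have hi: "((\<lambda>x. (\<beta> - 1) * x powr (- \<beta>)) has_integral (\<beta> - 1) * (-(q powr (-\<beta>+1)) / (-\<beta>+1))) {q..}"
    using has_integral_powr_to_inf[of "-\<beta>" q] b q by (intro has_integral_mult_right) auto
  have "(\<integral>\<^sup>+ v. dens \<beta> (l, v) * indicator {q<..} v \<partial>lborel)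
     \<le> (\<integral>\<^sup>+ v. ennreal ((\<beta> - 1) * v powr (- \<beta>)) * indicator {q..} v \<partial>lborel)"
    using q by (intro nn_integral_mono) (auto simp: dens_def indicator_def)
  also have "\<dots> = ennreal ((\<beta> - 1) * (-(q powr (-\<beta>+1)) / (-\<beta>+1)))"
    using b q by (intro nn_integral_has_integral_lebesgue' hi) auto
  finally show ?thesis using order.strict_trans1 by fastforce
qed

definition L2 :: "nat list \<Rightarrow> nat list set set" where
  "L2 w = {l \<in> lines. butlast w \<in> l \<and> w \<in> l}"

definition Aset :: "nat list \<Rightarrow> real \<Rightarrow> (nat list set \<times> real) set" where
  "Aset w q = L2 w \<times> {q<..}"

lemma Aset_sets: "line_measure \<mu> \<Longrightarrow> Aset w q \<in> sets (road_intensity \<mu> \<beta>)"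
  unfolding Aset_def RI_sets L2_def by (intro pair_measureI lm_L2) auto

lemma butlast_dist: "w \<noteq> [] \<Longrightarrow> tdist (butlast w) w = 1"
proof -
  assume w: "w \<noteq> []"
  then have e: "w = butlast w @ [last w]" by simp
  have "lcp (butlast w) (butlast w @ [last w]) = length (butlast w)" by (rule lcp_prefix2)
  then have "lcp (butlast w) w = length (butlast w)" using e by metis
  moreover obtain n where "length w = Suc n" using w by (cases w) auto
  ultimately show ?thesis unfolding tdist_def by simp
qed

lemma L2_fin:
  assumes lm: "line_measure \<mu>" and w: "w \<noteq> []"
  shows "emeasure \<mu> (L2 w) < \<infinity>"
proof (cases "w \<in> TV")
  case True
  have e: "w = butlast w @ [last w]" using w by simp
  have bTV: "butlast w \<in> TV" using TV_appendD[of "butlast w" "[last w]"] True e by simp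
  have ne: "butlast w \<noteq> w" using w e by (metis append_self_conv list.simps(3))
  have "emeasure \<mu> (L2 w) = ennreal ((1/2) ^ tdist (butlast w) w)"
    using lm bTV True ne unfolding line_measure_def L2_def by blast
  then show ?thesis by simp
next
  case False
  then have e: "L2 w = {}" using lines_sub unfolding L2_def by auto
  show ?thesis unfolding e by simp
qed

lemma Aset_fin:
  assumes lm: "line_measure \<mu>" and b: "\<beta> > 1" and w: "w \<noteq> []" and q: "q > 0"
  shows "emeasure (road_intensity \<mu> \<beta>) (Aset w q) < \<infinity>"
proof -
  define C where "C = (\<integral>\<^sup>+ v. dens \<beta> (undefined, v) * indicator {q<..} v \<partial>lborel)"
  have C: "C < \<infinity>" unfolding C_def using tail_integral_fin[OF b q] .
  have L2s: "L2 w \<in> sets \<mu>" unfolding L2_def by (rule lm_L2[OF lm])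
  have As: "Aset w q \<in> sets (\<mu> \<Otimes>\<^sub>M lborel)" using Aset_sets[OF lm] RI_sets by blast
  have "emeasure (road_intensity \<mu> \<beta>) (Aset w q) = (\<integral>\<^sup>+ p. dens \<beta> p * indicator (Aset w q) p \<partial>(\<mu> \<Otimes>\<^sub>M lborel))"
    unfolding RI_def2 using As by (intro emeasure_density) auto
  also have "\<dots> = (\<integral>\<^sup>+ l. \<integral>\<^sup>+ v. dens \<beta> (l, v) * indicator (Aset w q) (l, v) \<partial>lborel \<partial>\<mu>)"
    using As by (intro lborel.nn_integral_fst[symmetric]) auto
  also have "\<dots> = (\<integral>\<^sup>+ l. C * indicator (L2 w) l \<partial>\<mu>)"
  proof (rule nn_integral_cong)
    fix l
    show "(\<integral>\<^sup>+ v. dens \<beta> (l, v) * indicator (Aset w q) (l, v) \<partial>lborel) = C * indicator (L2 w) l"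
    proof (cases "l \<in> L2 w")
      case True
      have "(\<integral>\<^sup>+ v. dens \<beta> (l, v) * indicator (Aset w q) (l, v) \<partial>lborel) = C"
        unfolding C_def Aset_def using True by (intro nn_integral_cong) (auto simp: dens_def indicator_def)
      then show ?thesis using True by simp
    next
      case False
      then show ?thesis unfolding Aset_def by (simp add: indicator_def)
    qed
  qed
  also have "\<dots> = C * emeasure \<mu> (L2 w)" using L2s by (rule nn_integral_cmult_indicator)
  also have "\<dots> < \<infinity>" using C L2_fin[OF lm w] by (simp add: ennreal_mult_less_top)
  finally show ?thesis .
qed


lemma aut_inj: "tree_aut \<psi> \<Longrightarrow> inj_on \<psi> TV"
  unfolding tree_aut_def bij_betw_def by simp

lemma aut_img: "tree_aut \<psi> \<Longrightarrow> \<psi> ` TV = TV"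
  unfolding tree_aut_def bij_betw_def by simp

lemma aut_line: assumes a: "tree_aut \<psi>" and l: "l \<in> lines" shows "\<psi> ` l \<in> lines"
proof -
  obtain f where f: "l = range f" "\<forall>i. f i \<in> TV" "\<forall>i j. tdist (f i) (f j) = nat \<bar>i - j\<bar>"
    using l unfolding lines_def by blast
  have "\<forall>i. (\<psi> \<circ> f) i \<in> TV" using f(2) aut_img[OF a] by auto
  moreover have "\<forall>i j. tdist ((\<psi> \<circ> f) i) ((\<psi> \<circ> f) j) = nat \<bar>i - j\<bar>"
    using f(2,3) a unfolding tree_aut_def by simp
  ultimately have "range (\<psi> \<circ> f) \<in> lines" unfolding lines_def by blast
  then show ?thesis using f(1) by (simp add: image_comp)
qed

lemma aut_mem:
  assumes a: "tree_aut \<psi>" and l: "l \<subseteq> TV" and z: "z \<in> TV"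
  shows "\<psi> z \<in> \<psi> ` l \<longleftrightarrow> z \<in> l"
  using aut_inj[OF a] l z by (auto simp: inj_on_def)

lemma Phi_meas:
  assumes lm: "line_measure \<mu>" and a: "tree_aut \<psi>"
  shows "(\<lambda>l. \<psi> ` l) \<in> measurable \<mu> \<mu>"
proof (rule measurable_sigma_sets)
  show "sets \<mu> = sigma_sets lines {{l \<in> lines. x \<in> l} | x. x \<in> TV}"
    using lm_sets[OF lm] unfolding line_sets_def .
  show "{{l \<in> lines. x \<in> l} | x. x \<in> TV} \<subseteq> Pow lines" by auto
  show "(\<lambda>l. \<psi> ` l) \<in> space \<mu> \<rightarrow> lines" using lm_space[OF lm] aut_line[OF a] by auto
  fix y assume "y \<in> {{l \<in> lines. x \<in> l} | x. x \<in> TV}"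
  then obtain x where x: "x \<in> TV" "y = {l \<in> lines. x \<in> l}" by auto
  obtain z where z: "z \<in> TV" "x = \<psi> z" using x(1) aut_img[OF a] by blast
  have eqv: "\<And>l. l \<in> lines \<Longrightarrow> x \<in> \<psi> ` l \<longleftrightarrow> z \<in> l"
    using aut_mem[OF a _ z(1)] lines_sub z(2) by simp
  have "(\<lambda>l. \<psi> ` l) -` y \<inter> space \<mu> = {l \<in> lines. z \<in> l}"
  proof (intro equalityI subsetI)
    fix l assume "l \<in> (\<lambda>l. \<psi> ` l) -` y \<inter> space \<mu>"
    then have "l \<in> lines" "x \<in> \<psi> ` l" using x(2) lm_space[OF lm] by auto
    then show "l \<in> {l \<in> lines. z \<in> l}" using eqv by auto
  next
    fix l assume "l \<in> {l \<in> lines. z \<in> l}"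
    then have "l \<in> lines" "x \<in> \<psi> ` l" using eqv by auto
    then show "l \<in> (\<lambda>l. \<psi> ` l) -` y \<inter> space \<mu>" using x(2) lm_space[OF lm] aut_line[OF a] by auto
  qed
  then show "(\<lambda>l. \<psi> ` l) -` y \<inter> space \<mu> \<in> sets \<mu>" using lm_Lx[OF lm] by simp
qed

lemma Phi_distr:
  assumes lm: "line_measure \<mu>" and a: "tree_aut \<psi>"
  shows "distr \<mu> \<mu> (\<lambda>l. \<psi> ` l) = \<mu>"
proof (rule measure_eqI)
  show "sets (distr \<mu> \<mu> (\<lambda>l. \<psi> ` l)) = sets \<mu>" by simp
  fix A assume A: "A \<in> sets (distr \<mu> \<mu> (\<lambda>l. \<psi> ` l))"
  have inv: "\<forall>A\<in>sets \<mu>. emeasure \<mu> ((\<lambda>l. \<psi> ` l) -` A \<inter> lines) = emeasure \<mu> A"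
    using lm a unfolding line_measure_def by blast
  show "emeasure (distr \<mu> \<mu> (\<lambda>l. \<psi> ` l)) A = emeasure \<mu> A"
    using A inv Phi_meas[OF lm a] lm_space[OF lm] by (simp add: emeasure_distr)
qed

definition Psi :: "(nat list \<Rightarrow> nat list) \<Rightarrow> nat list set \<times> real \<Rightarrow> nat list set \<times> real" where
  "Psi \<psi> = (\<lambda>(l, v). (\<psi> ` l, v))"

lemma Psi_meas:
  assumes lm: "line_measure \<mu>" and a: "tree_aut \<psi>"
  shows "Psi \<psi> \<in> measurable (\<mu> \<Otimes>\<^sub>M lborel) (\<mu> \<Otimes>\<^sub>M lborel)"
proof -
  have [measurable]: "(\<lambda>l. \<psi> ` l) \<in> measurable \<mu> \<mu>" by (rule Phi_meas[OF lm a])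
  show ?thesis unfolding Psi_def by measurable
qed

lemma Psi_distr:
  assumes lm: "line_measure \<mu>" and a: "tree_aut \<psi>"
  shows "distr (\<mu> \<Otimes>\<^sub>M lborel) (\<mu> \<Otimes>\<^sub>M lborel) (Psi \<psi>) = \<mu> \<Otimes>\<^sub>M lborel"
proof -
  have "distr \<mu> \<mu> (\<lambda>l. \<psi> ` l) \<Otimes>\<^sub>M distr lborel lborel (\<lambda>x. x)
      = distr (\<mu> \<Otimes>\<^sub>M lborel) (\<mu> \<Otimes>\<^sub>M lborel) (\<lambda>(x, y). (\<psi> ` x, y))"
    by (rule pair_measure_distr[OF Phi_meas[OF lm a]]) (auto simp: lborel.sigma_finite_measure_axioms)
  then show ?thesis unfolding Phi_distr[OF lm a] distr_id Psi_def by (rule sym)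
qed

lemma dens_Psi: "dens \<beta> (Psi \<psi> p) = dens \<beta> p"
  unfolding dens_def Psi_def by (cases p) simp

lemma RI_inv:
  assumes lm: "line_measure \<mu>" and a: "tree_aut \<psi>" and A: "A \<in> sets (road_intensity \<mu> \<beta>)"
  shows "emeasure (road_intensity \<mu> \<beta>) (Psi \<psi> -` A \<inter> space (road_intensity \<mu> \<beta>)) = emeasure (road_intensity \<mu> \<beta>) A"
proof -
  let ?N = "\<mu> \<Otimes>\<^sub>M lborel"
  have A': "A \<in> sets ?N" using A RI_sets by blast
  have sp: "space (road_intensity \<mu> \<beta>) = space ?N" unfolding RI_def2 by simp
  have pm: "Psi \<psi> \<in> measurable ?N ?N" by (rule Psi_meas[OF lm a])
  have pre: "Psi \<psi> -` A \<inter> space ?N \<in> sets ?N" using pm A' by (rule measurable_sets)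
  have "emeasure (road_intensity \<mu> \<beta>) (Psi \<psi> -` A \<inter> space (road_intensity \<mu> \<beta>))
      = (\<integral>\<^sup>+ p. dens \<beta> p * indicator (Psi \<psi> -` A \<inter> space ?N) p \<partial>?N)"
    unfolding sp unfolding RI_def2 using pre by (intro emeasure_density) auto
  also have "\<dots> = (\<integral>\<^sup>+ p. dens \<beta> (Psi \<psi> p) * indicator A (Psi \<psi> p) \<partial>?N)"
    by (intro nn_integral_cong) (auto simp: dens_Psi indicator_def)
  also have "\<dots> = (\<integral>\<^sup>+ p. dens \<beta> p * indicator A p \<partial>(distr ?N ?N (Psi \<psi>)))"
    using pm A' by (intro nn_integral_distr[symmetric]) auto
  also have "\<dots> = (\<integral>\<^sup>+ p. dens \<beta> p * indicator A p \<partial>?N)" unfolding Psi_distr[OF lm a] ..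
  also have "\<dots> = emeasure (road_intensity \<mu> \<beta>) A"
    unfolding RI_def2 using A' by (intro emeasure_density[symmetric]) auto
  finally show ?thesis .
qed


definition Rt :: "(nat list \<Rightarrow> nat list) \<Rightarrow> ('w \<Rightarrow> (nat list set \<times> real) set) \<Rightarrow> 'w \<Rightarrow> (nat list set \<times> real) set" where
  "Rt \<psi> R \<omega> = Psi \<psi> ` (R \<omega> \<inter> (lines \<times> UNIV))"

lemma Psi_inj: assumes a: "tree_aut \<psi>" shows "inj_on (Psi \<psi>) (lines \<times> UNIV)"
proof (rule inj_onI)
  fix p p' assume p: "p \<in> lines \<times> UNIV" "p' \<in> lines \<times> UNIV" "Psi \<psi> p = Psi \<psi> p'"
  obtain l v l' v' where e: "p = (l, v)" "p' = (l', v')" by (cases p, cases p') auto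
  have "\<psi> ` l = \<psi> ` l'" "v = v'" using p(3) e unfolding Psi_def by auto
  moreover have "l \<in> Pow TV" "l' \<in> Pow TV" using p e lines_sub by auto
  ultimately have "l = l'" using inj_on_image_Pow[OF aut_inj[OF a]] by (auto dest: inj_onD)
  then show "p = p'" using e \<open>v = v'\<close> by simp
qed

lemma Psi_space: assumes a: "tree_aut \<psi>" shows "Psi \<psi> ` (lines \<times> UNIV) \<subseteq> lines \<times> UNIV"
  using aut_line[OF a] unfolding Psi_def by auto

lemma Rt_int:
  "Rt \<psi> R \<omega> \<inter> A = Psi \<psi> ` (R \<omega> \<inter> (Psi \<psi> -` A \<inter> (lines \<times> UNIV)))"
  unfolding Rt_def by auto

lemma Rt_card:
  assumes a: "tree_aut \<psi>"
  shows "card (Rt \<psi> R \<omega> \<inter> A) = card (R \<omega> \<inter> (Psi \<psi> -` A \<inter> (lines \<times> UNIV)))"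
  unfolding Rt_int using Psi_inj[OF a] by (intro card_image) (auto intro: inj_on_subset)

lemma Rt_finite:
  assumes a: "tree_aut \<psi>"
  shows "finite (Rt \<psi> R \<omega> \<inter> A) \<longleftrightarrow> finite (R \<omega> \<inter> (Psi \<psi> -` A \<inter> (lines \<times> UNIV)))"
  unfolding Rt_int using Psi_inj[OF a] by (intro finite_image_iff) (auto intro: inj_on_subset)

lemma pre_sets:
  assumes lm: "line_measure \<mu>" and a: "tree_aut \<psi>" and A: "A \<in> sets (road_intensity \<mu> \<beta>)"
  shows "Psi \<psi> -` A \<inter> (lines \<times> UNIV) \<in> sets (road_intensity \<mu> \<beta>)"
proof -
  have "A \<in> sets (\<mu> \<Otimes>\<^sub>M lborel)" using A RI_sets by blast
  then have "Psi \<psi> -` A \<inter> space (\<mu> \<Otimes>\<^sub>M lborel) \<in> sets (\<mu> \<Otimes>\<^sub>M lborel)"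
    using Psi_meas[OF lm a] by (rule measurable_sets[rotated])
  then show ?thesis using RI_sets RI_space[OF lm] by (simp add: space_pair_measure lm_space[OF lm])
qed

lemma pre_emeasure:
  assumes lm: "line_measure \<mu>" and a: "tree_aut \<psi>" and A: "A \<in> sets (road_intensity \<mu> \<beta>)"
  shows "emeasure (road_intensity \<mu> \<beta>) (Psi \<psi> -` A \<inter> (lines \<times> UNIV)) = emeasure (road_intensity \<mu> \<beta>) A"
  using RI_inv[OF lm a A] RI_space[OF lm] by simp

lemma Rt_pp:
  assumes lm: "line_measure \<mu>" and a: "tree_aut \<psi>" and pp: "poisson_process M (road_intensity \<mu> \<beta>) R"
  shows "poisson_process M (road_intensity \<mu> \<beta>) (Rt \<psi> R)"
proof -
  let ?I = "road_intensity \<mu> \<beta>"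
  let ?P = "\<lambda>A. Psi \<psi> -` A \<inter> (lines \<times> UNIV)"
  have c1: "prob_space M" using pp_prob[OF pp] .
  have c2: "\<forall>\<omega>\<in>space M. Rt \<psi> R \<omega> \<subseteq> space ?I"
    using Psi_space[OF a] RI_space[OF lm] unfolding Rt_def by auto
  have c3: "(AE \<omega> in M. finite (Rt \<psi> R \<omega> \<inter> A)) \<and>
        (\<forall>k::nat. measure M {\<omega> \<in> space M. card (Rt \<psi> R \<omega> \<inter> A) = k}
            = exp (- measure ?I A) * measure ?I A ^ k / fact k)"
    if A: "A \<in> sets ?I" "emeasure ?I A < \<infinity>" for A
  proof -
    have A': "?P A \<in> sets ?I" "emeasure ?I (?P A) < \<infinity>"
      using pre_sets[OF lm a A(1)] pre_emeasure[OF lm a A(1)] A(2) by auto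
    have me: "measure ?I (?P A) = measure ?I A"
      using pre_emeasure[OF lm a A(1)] by (simp add: measure_def)
    have "AE \<omega> in M. finite (Rt \<psi> R \<omega> \<inter> A)"
      using pp_finite[OF pp A'] by (simp add: Rt_finite[OF a])
    moreover have "measure M {\<omega> \<in> space M. card (Rt \<psi> R \<omega> \<inter> A) = k}
            = exp (- measure ?I A) * measure ?I A ^ k / fact k" for k :: nat
      using pp_prob_k[OF pp A', of k] unfolding me by (simp add: Rt_card[OF a])
    ultimately show ?thesis by blast
  qed
  have c4: "prob_space.indep_vars M (\<lambda>_. count_space (UNIV :: nat set))
           (\<lambda>i \<omega>. card (Rt \<psi> R \<omega> \<inter> A i)) {..<n}"
    if A: "\<forall>i<n. A i \<in> sets ?I \<and> emeasure ?I (A i) < \<infinity>"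
      and D: "\<forall>i<n. \<forall>j<n. i \<noteq> j \<longrightarrow> A i \<inter> A j = {}" for n :: nat and A :: "nat \<Rightarrow> _"
  proof -
    have A': "\<forall>i<n. ?P (A i) \<in> sets ?I \<and> emeasure ?I (?P (A i)) < \<infinity>"
      using A pre_sets[OF lm a] pre_emeasure[OF lm a] by auto
    have D': "\<forall>i<n. \<forall>j<n. i \<noteq> j \<longrightarrow> ?P (A i) \<inter> ?P (A j) = {}"
    proof (intro allI impI)
      fix i j assume "i < n" "j < n" "i \<noteq> j"
      then have "A i \<inter> A j = {}" using D by simp
      then show "?P (A i) \<inter> ?P (A j) = {}" by auto
    qed
    have "(\<lambda>i \<omega>. card (Rt \<psi> R \<omega> \<inter> A i)) = (\<lambda>i \<omega>. card (R \<omega> \<inter> ?P (A i)))"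
      by (simp add: Rt_card[OF a])
    then show ?thesis using pp_indep[OF pp A' D'] by simp
  qed
  show ?thesis unfolding poisson_process_def using c1 c2 c3 c4 by blast
qed

lemma Rt_pos:
  assumes "\<forall>\<omega>\<in>space M. R \<omega> \<subseteq> lines \<times> {0<..}" and a: "tree_aut \<psi>"
  shows "\<forall>\<omega>\<in>space M. Rt \<psi> R \<omega> \<subseteq> lines \<times> {0<..}"
  using assms aut_line[OF a] unfolding Rt_def Psi_def by fastforce

lemma Rt_speed:
  assumes a: "tree_aut \<psi>" and R: "R \<omega> \<subseteq> lines \<times> UNIV" and ab: "a \<in> TV" "b \<in> TV"
  shows "edge_speed (Rt \<psi> R) \<omega> {\<psi> a, \<psi> b} = edge_speed R \<omega> {a, b}"
proof -
  have "{r \<in> Rt \<psi> R \<omega>. {\<psi> a, \<psi> b} \<subseteq> fst r} = Psi \<psi> ` {r \<in> R \<omega>. {a, b} \<subseteq> fst r}"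
  proof (intro equalityI subsetI)
    fix r assume "r \<in> {r \<in> Rt \<psi> R \<omega>. {\<psi> a, \<psi> b} \<subseteq> fst r}"
    then obtain l v where r: "(l, v) \<in> R \<omega>" "r = (\<psi> ` l, v)" "\<psi> a \<in> \<psi> ` l" "\<psi> b \<in> \<psi> ` l"
      unfolding Rt_def Psi_def using R by auto
    have "l \<subseteq> TV" using r(1) R lines_sub by auto
    then have "a \<in> l" "b \<in> l" using r(3,4) aut_mem[OF a] ab by auto
    then show "r \<in> Psi \<psi> ` {r \<in> R \<omega>. {a, b} \<subseteq> fst r}" using r(1,2) unfolding Psi_def by force
  next
    fix r assume "r \<in> Psi \<psi> ` {r \<in> R \<omega>. {a, b} \<subseteq> fst r}"
    then obtain l v where r: "(l, v) \<in> R \<omega>" "r = (\<psi> ` l, v)" "a \<in> l" "b \<in> l"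
      unfolding Psi_def by auto
    then show "r \<in> {r \<in> Rt \<psi> R \<omega>. {\<psi> a, \<psi> b} \<subseteq> fst r}"
      using R unfolding Rt_def Psi_def by force
  qed
  then show ?thesis unfolding edge_speed_def by (simp add: image_image Psi_def split_beta)
qed


definition JJ :: "(nat list \<times> rat) set" where "JJ = {(w, q). w \<noteq> [] \<and> 0 < q}"

definition AJ :: "nat list \<times> rat \<Rightarrow> (nat list set \<times> real) set" where
  "AJ j = Aset (fst j) (real_of_rat (snd j))"

definition NR :: "('w \<Rightarrow> (nat list set \<times> real) set) \<Rightarrow> 'w \<Rightarrow> nat list \<times> rat \<Rightarrow> nat" where
  "NR Q \<omega> = (\<lambda>j\<in>JJ. card (Q \<omega> \<inter> AJ j))"

definition spd :: "(nat list \<times> rat \<Rightarrow> nat) \<Rightarrow> nat list \<Rightarrow> ennreal" where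
  "spd c w = (SUP q\<in>{q::rat. 0 < q}. if 1 \<le> c (w, q) then ennreal (real_of_rat q) else 0)"

definition good :: "('w \<Rightarrow> (nat list set \<times> real) set) \<Rightarrow> 'w \<Rightarrow> bool" where
  "good Q \<omega> \<longleftrightarrow> Q \<omega> \<subseteq> lines \<times> {0<..} \<and> (\<forall>j\<in>JJ. finite (Q \<omega> \<inter> AJ j))"

lemma speed_eq:
  assumes g: "good Q \<omega>" and w: "w \<noteq> []"
  shows "edge_speed Q \<omega> {butlast w, w} = spd (NR Q \<omega>) w"
proof -
  define X where "X = {r \<in> Q \<omega>. {butlast w, w} \<subseteq> fst r}"
  have Qs: "Q \<omega> \<subseteq> lines \<times> {0<..}" using g unfolding good_def by simp
  have tm: "(if 1 \<le> NR Q \<omega> (w, q) then ennreal (real_of_rat q) else 0)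
      = (if \<exists>r\<in>X. real_of_rat q < snd r then ennreal (real_of_rat q) else 0)" if q: "0 < q" for q
  proof -
    have j: "(w, q) \<in> JJ" using w q unfolding JJ_def by simp
    have fin: "finite (Q \<omega> \<inter> AJ (w, q))" using g j unfolding good_def by blast
    have "1 \<le> NR Q \<omega> (w, q) \<longleftrightarrow> Q \<omega> \<inter> AJ (w, q) \<noteq> {}"
      using fin j unfolding NR_def by (auto simp: Suc_le_eq card_gt_0_iff)
    also have "\<dots> \<longleftrightarrow> (\<exists>r\<in>X. real_of_rat q < snd r)"
      using Qs unfolding X_def AJ_def Aset_def L2_def by force
    finally show ?thesis by simp
  qed
  have sp: "spd (NR Q \<omega>) w = (SUP q\<in>{q::rat. 0 < q}. if \<exists>r\<in>X. real_of_rat q < snd r then ennreal (real_of_rat q) else 0)"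
    unfolding spd_def using tm by (intro SUP_cong) auto
  have es: "edge_speed Q \<omega> {butlast w, w} = (SUP r\<in>X. ennreal (snd r))"
    unfolding edge_speed_def X_def ..
  show ?thesis unfolding sp es
  proof (rule antisym)
    show "(SUP r\<in>X. ennreal (snd r)) \<le> (SUP q\<in>{q::rat. 0 < q}. if \<exists>r\<in>X. real_of_rat q < snd r then ennreal (real_of_rat q) else 0)"
    proof (rule SUP_least)
      fix r assume r: "r \<in> X"
      have s0: "0 < snd r" using r Qs unfolding X_def by auto
      show "ennreal (snd r) \<le> (SUP q\<in>{q::rat. 0 < q}. if \<exists>r\<in>X. real_of_rat q < snd r then ennreal (real_of_rat q) else 0)"
        unfolding le_SUP_iff
      proof (intro allI impI)
        fix y :: ennreal assume y: "y < ennreal (snd r)"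
        then obtain y' where y': "0 \<le> y'" "y = ennreal y'" by (cases y) auto
        have "y' < snd r" using y y' by (simp add: ennreal_less_iff)
        then obtain z where z: "z \<in> \<rat>" "y' < z" "z < snd r" using Rats_dense_in_real by blast
        then obtain q where q: "z = real_of_rat q" by (auto simp: Rats_def)
        have "0 < real_of_rat q" using z(2) q y'(1) by linarith
        then have q0: "0 < q" by (simp add: zero_less_of_rat_iff)
        have "y < ennreal (real_of_rat q)" using y' z q by (simp add: ennreal_less_iff)
        moreover have "\<exists>r\<in>X. real_of_rat q < snd r" using r z q by auto
        ultimately show "\<exists>i\<in>{q::rat. 0 < q}. y < (if \<exists>r\<in>X. real_of_rat i < snd r then ennreal (real_of_rat i) else 0)"
          using q0 by auto
      qed
    qed
    show "(SUP q\<in>{q::rat. 0 < q}. if \<exists>r\<in>X. real_of_rat q < snd r then ennreal (real_of_rat q) else 0) \<le> (SUP r\<in>X. ennreal (snd r))"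
    proof (rule SUP_least)
      fix q :: rat assume "q \<in> {q. 0 < q}"
      show "(if \<exists>r\<in>X. real_of_rat q < snd r then ennreal (real_of_rat q) else 0) \<le> (SUP r\<in>X. ennreal (snd r))"
      proof (cases "\<exists>r\<in>X. real_of_rat q < snd r")
        case True
        then obtain r where r: "r \<in> X" "real_of_rat q < snd r" by blast
        have "ennreal (real_of_rat q) \<le> ennreal (snd r)" using r(2) by (intro ennreal_leI) simp
        also have "\<dots> \<le> (SUP r\<in>X. ennreal (snd r))" using r(1) by (rule SUP_upper)
        finally show ?thesis using True by simp
      qed simp
    qed
  qed
qed

lemma drive_root_eq:
  assumes g: "good Q \<omega>"
  shows "drive_time Q \<omega> troot x = (\<Sum>k<length x. inverse (spd (NR Q \<omega>) (take (Suc k) x)))"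
proof -
  have "drive_time Q \<omega> troot x = (\<Sum>k<length x. inverse (edge_speed Q \<omega> {take k x, take (Suc k) x}))"
    unfolding troot_def by (rule drive_time_root)
  also have "\<dots> = (\<Sum>k<length x. inverse (spd (NR Q \<omega>) (take (Suc k) x)))"
  proof (rule sum.cong)
    fix k assume k: "k \<in> {..<length x}"
    have ne: "take (Suc k) x \<noteq> []" using k by auto
    have "butlast (take (Suc k) x) = take k x" using k by (simp add: butlast_take)
    then show "inverse (edge_speed Q \<omega> {take k x, take (Suc k) x}) = inverse (spd (NR Q \<omega>) (take (Suc k) x))"
      using speed_eq[OF g ne] by simp
  qed simp
  finally show ?thesis .
qed

lemma finite_TV_iff:
  "finite {x \<in> TV. P x} \<longleftrightarrow> (\<exists>n::nat. \<forall>x. x \<in> TV \<longrightarrow> P x \<longrightarrow> length x < n)"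
proof
  assume f: "finite {x \<in> TV. P x}"
  then have "finite (length ` {x \<in> TV. P x})" by simp
  then obtain n where "\<forall>m\<in>length ` {x \<in> TV. P x}. m < n"
    using finite_nat_set_iff_bounded by blast
  then show "\<exists>n::nat. \<forall>x. x \<in> TV \<longrightarrow> P x \<longrightarrow> length x < n" by auto
next
  assume "\<exists>n::nat. \<forall>x. x \<in> TV \<longrightarrow> P x \<longrightarrow> length x < n"
  then obtain n where n: "\<forall>x. x \<in> TV \<longrightarrow> P x \<longrightarrow> length x < n" by blast
  have "{x \<in> TV. P x} \<subseteq> {xs. set xs \<subseteq> {0,1,2} \<and> length xs \<le> n}"
    using n by (auto simp: TV_def less_imp_le)
  moreover have "finite {xs. set xs \<subseteq> {0::nat,1,2} \<and> length xs \<le> n}"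
    by (rule finite_lists_length_le) simp
  ultimately show "finite {x \<in> TV. P x}" by (rule finite_subset)
qed

abbreviation PJ :: "(nat list \<times> rat \<Rightarrow> nat) measure" where
  "PJ \<equiv> PiM JJ (\<lambda>_. count_space UNIV)"

lemma spd_meas:
  assumes w: "w \<noteq> []"
  shows "(\<lambda>c. spd c w) \<in> borel_measurable PJ"
proof -
  have tm: "(\<lambda>c. if 1 \<le> c (w, q) then ennreal (real_of_rat q) else 0) \<in> borel_measurable PJ"
    if q: "q \<in> {q::rat. 0 < q}" for q
  proof -
    have j: "(w, q) \<in> JJ" using w q unfolding JJ_def by simp
    have cm: "(\<lambda>c. c (w, q)) \<in> measurable PJ (count_space UNIV)"
      using measurable_component_singleton[OF j, of "\<lambda>_. count_space UNIV"] by simp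
    have "{c \<in> space PJ. 1 \<le> c (w, q)} = (\<lambda>c. c (w, q)) -` {1..} \<inter> space PJ" by auto
    also have "\<dots> \<in> sets PJ" using cm by (rule measurable_sets) simp
    finally have "{c \<in> space PJ. 1 \<le> c (w, q)} \<in> sets PJ" .
    then show ?thesis by (intro measurable_If) auto
  qed
  show ?thesis unfolding spd_def
    by (rule borel_measurable_SUP[OF _ tm]) auto
qed

definition ballS :: "real \<Rightarrow> (nat list \<times> rat \<Rightarrow> nat) set" where
  "ballS t = {c \<in> space PJ. \<exists>n::nat. \<forall>x. x \<in> TV \<longrightarrow>
       (\<Sum>k<length x. inverse (spd c (take (Suc k) x))) \<le> ennreal t \<longrightarrow> length x < n}"

lemma ballS_sets: "ballS t \<in> sets PJ"
proof -
  have P: "{c \<in> space PJ. (\<Sum>k<length x. inverse (spd c (take (Suc k) x))) \<le> ennreal t} \<in> sets PJ" for x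
  proof -
    have [measurable]: "(\<lambda>c. spd c (take (Suc k) x)) \<in> borel_measurable PJ" if "k < length x" for k
      using that by (intro spd_meas) auto
    have "(\<lambda>c. \<Sum>k<length x. inverse (spd c (take (Suc k) x))) \<in> borel_measurable PJ"
      by (intro borel_measurable_sum borel_measurable_inverse_ennreal) auto
    then show ?thesis by measurable
  qed
  have "ballS t = {c \<in> space PJ. \<exists>n::nat. \<forall>x. x \<in> TV \<longrightarrow>
       (\<Sum>k<length x. inverse (spd c (take (Suc k) x))) \<le> ennreal t \<longrightarrow> length x < n}"
    unfolding ballS_def ..
  also have "\<dots> \<in> sets PJ"
    using P by (intro sets.sets_Collect_countable_Ex sets.sets_Collect_countable_All sets.sets_Collect_imp sets.sets_Collect_const) auto
  finally show ?thesis .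
qed

lemma AJ_ok:
  assumes lm: "line_measure \<mu>" and b: "\<beta> > 1"
  shows "\<forall>j\<in>JJ. AJ j \<in> sets (road_intensity \<mu> \<beta>) \<and> emeasure (road_intensity \<mu> \<beta>) (AJ j) < \<infinity>"
proof
  fix j assume j: "j \<in> JJ"
  then obtain w q where e: "j = (w, q)" "w \<noteq> []" "0 < q" unfolding JJ_def by auto
  have "0 < real_of_rat q" using e(3) by simp
  then show "AJ j \<in> sets (road_intensity \<mu> \<beta>) \<and> emeasure (road_intensity \<mu> \<beta>) (AJ j) < \<infinity>"
    unfolding AJ_def e(1) using Aset_sets[OF lm] Aset_fin[OF lm b e(2)] by simp
qed

lemma NR_meas:
  assumes lm: "line_measure \<mu>" and b: "\<beta> > 1" and pp: "poisson_process M (road_intensity \<mu> \<beta>) Q"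
  shows "NR Q \<in> measurable M PJ"
  unfolding NR_def using pp_rv[OF pp] AJ_ok[OF lm b] by (intro measurable_restrict) auto

lemma good_AE:
  assumes lm: "line_measure \<mu>" and b: "\<beta> > 1" and pp: "poisson_process M (road_intensity \<mu> \<beta>) Q"
    and pos: "\<forall>\<omega>\<in>space M. Q \<omega> \<subseteq> lines \<times> {0<..}"
  shows "AE \<omega> in M. good Q \<omega>"
proof -
  have c: "countable JJ" by (rule countable_subset[of _ UNIV]) auto
  have "AE \<omega> in M. \<forall>j\<in>JJ. finite (Q \<omega> \<inter> AJ j)"
    using c AJ_ok[OF lm b] pp_finite[OF pp] by (subst AE_ball_countable) auto
  moreover have "AE \<omega> in M. Q \<omega> \<subseteq> lines \<times> {0<..}" using pos by (intro AE_I2) auto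
  ultimately show ?thesis unfolding good_def by eventually_elim auto
qed

lemma ball_iff:
  assumes g: "good Q \<omega>" and sp: "NR Q \<omega> \<in> space PJ"
  shows "finite {x \<in> TV. drive_time Q \<omega> troot x \<le> ennreal t} \<longleftrightarrow> NR Q \<omega> \<in> ballS t"
  unfolding finite_TV_iff ballS_def drive_root_eq[OF g] using sp by simp

lemma transfer:
  assumes lm: "line_measure \<mu>" and b: "\<beta> > 1"
    and ppR: "poisson_process M (road_intensity \<mu> \<beta>) R" and ppQ: "poisson_process M (road_intensity \<mu> \<beta>) Q"
    and posR: "\<forall>\<omega>\<in>space M. R \<omega> \<subseteq> lines \<times> {0<..}" and posQ: "\<forall>\<omega>\<in>space M. Q \<omega> \<subseteq> lines \<times> {0<..}"
    and hyp: "AE \<omega> in M. finite {x \<in> TV. drive_time R \<omega> troot x \<le> ennreal t}"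
  shows "AE \<omega> in M. finite {x \<in> TV. drive_time Q \<omega> troot x \<le> ennreal t}"
proof -
  have mR: "NR R \<in> measurable M PJ" by (rule NR_meas[OF lm b ppR])
  have spM: "AE \<omega> in M. \<omega> \<in> space M" by (rule AE_I2)
  have mQ: "NR Q \<in> measurable M PJ" by (rule NR_meas[OF lm b ppQ])
  have Ss: "{c \<in> space PJ. c \<in> ballS t} \<in> sets PJ"
    using ballS_sets[of t] sets.sets_into_space by (simp add: Int_absorb1 Collect_mem_eq[symmetric] Int_def[symmetric])
  have "AE \<omega> in M. NR R \<omega> \<in> ballS t"
    using hyp good_AE[OF lm b ppR posR] spM
  proof (eventually_elim)
    case (elim \<omega>)
    then show ?case using ball_iff[of R \<omega> t] measurable_space[OF mR] by auto
  qed
  then have AER: "AE c in distr M PJ (NR R). c \<in> ballS t"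
    using AE_distr_iff[OF mR Ss] by simp
  have E: "distr M PJ (NR R) = distr M PJ (NR Q)"
    unfolding NR_def by (rule pp_law[OF ppR ppQ AJ_ok[OF lm b]])
  have "AE c in distr M PJ (NR Q). c \<in> ballS t" using AER unfolding E .
  then have "AE \<omega> in M. NR Q \<omega> \<in> ballS t"
    using AE_distr_iff[OF mQ Ss] by simp
  then show ?thesis using good_AE[OF lm b ppQ posQ] spM
  proof (eventually_elim)
    case (elim \<omega>)
    then show ?case using ball_iff[of Q \<omega> t] measurable_space[OF mQ] by auto
  qed
qed


lemma edge_step:
  assumes r: "root_ray x"
  shows "drive_time R \<omega> (x n) (x (Suc n)) = inverse (edge_speed R \<omega> {x n, x (Suc n)})"
  using ray_drive[OF r, of n "Suc n" R \<omega>] by simp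

lemma ray_tail:
  assumes r: "root_ray x" and Rs: "R \<omega> \<subseteq> lines \<times> UNIV" and t: "t > 0"
    and fin: "(\<Sum>n. drive_time R \<omega> (x n) (x (Suc n))) \<noteq> \<infinity>"
  shows "\<exists>u\<in>TV. infinite {y \<in> TV. drive_time (Rt (phi (rev u)) R) \<omega> troot y \<le> ennreal t}"
proof -
  define d where "d n = drive_time R \<omega> (x n) (x (Suc n))" for n
  have dle: "d n \<le> (\<Sum>n. d n)" for n
    using sum_le_suminf[OF summableI, of "{n}" d] by simp
  have dfin: "d n \<noteq> \<infinity>" for n using dle[of n] fin unfolding d_def
    by (metis infinity_ennreal_def top.extremum_uniqueI)
  define rr where "rr n = enn2real (d n)" for n
  have rr0: "0 \<le> rr n" for n unfolding rr_def by simp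
  have drr: "d n = ennreal (rr n)" for n unfolding rr_def using dfin[of n] by (simp add: ennreal_enn2real_if)
  have sumr: "(\<Sum>n. ennreal (rr n)) \<noteq> top" using fin unfolding d_def[symmetric] drr by simp
  have sr: "summable rr" using summable_suminf_not_top[OF rr0 sumr] .
  obtain N where N: "\<forall>n\<ge>N. norm (\<Sum>i. rr (i + n)) < t" using suminf_exist_split[OF t sr] by blast
  have srN: "summable (\<lambda>i. rr (i + N))" using sr by (simp add: summable_iff_shift)
  have tail: "(\<Sum>k<j. rr (k + N)) \<le> t" for j
  proof -
    have "(\<Sum>k<j. rr (k + N)) \<le> (\<Sum>i. rr (i + N))" using srN rr0 by (intro sum_le_suminf) auto
    also have "\<dots> \<le> norm (\<Sum>i. rr (i + N))" by simp
    also have "\<dots> < t" using N by simp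
    finally show ?thesis by simp
  qed
  define u where "u = x N"
  define \<psi> where "\<psi> = phi (rev u)"
  have uTV: "u \<in> TV" unfolding u_def using ray_TV[OF r] .
  have a: "tree_aut \<psi>" unfolding \<psi>_def using TV_set[OF uTV] by (intro phi_aut) auto
  define wf where "wf m = drop N (x m)" for m
  have xm: "x m = u @ wf m" if "N \<le> m" for m unfolding u_def wf_def using ray_step[OF r that] .
  have lw: "length (wf m) = m - N" for m unfolding wf_def using ray_len[OF r] by simp
  have inball: "wf m \<in> {y \<in> TV. drive_time (Rt \<psi> R) \<omega> troot y \<le> ennreal t}" if m: "N \<le> m" for m
  proof -
    have wTV: "wf m \<in> TV" using TV_appendD[of u "wf m"] xm[OF m] ray_TV[OF r] by metis
    have xk: "x (N + k) = u @ take k (wf m)" if "k \<le> m - N" for k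
    proof -
      have "x (N + k) = take (N + k) (x m)" using ray_prefix[OF r] that m by simp
      also have "\<dots> = take (N + k) (u @ wf m)" using xm[OF m] by simp
      also have "\<dots> = u @ take k (wf m)" using ray_len[OF r, of N] unfolding u_def by simp
      finally show ?thesis .
    qed
    have pk: "\<psi> (x (N + k)) = take k (wf m)" if "k \<le> m - N" for k
      unfolding \<psi>_def xk[OF that] using xk[OF that] ray_TV[OF r, of "N + k"] by (intro psi_app) simp
    have "drive_time (Rt \<psi> R) \<omega> troot (wf m)
        = (\<Sum>k<m - N. inverse (edge_speed (Rt \<psi> R) \<omega> {take k (wf m), take (Suc k) (wf m)}))"
      unfolding troot_def drive_time_root lw ..
    also have "\<dots> = (\<Sum>k<m - N. d (k + N))"
    proof (rule sum.cong)
      fix k assume k: "k \<in> {..<m - N}"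
      have "{take k (wf m), take (Suc k) (wf m)} = {\<psi> (x (N + k)), \<psi> (x (N + Suc k))}"
        using pk[of k] pk[of "Suc k"] k by simp
      then have "edge_speed (Rt \<psi> R) \<omega> {take k (wf m), take (Suc k) (wf m)} = edge_speed R \<omega> {x (N + k), x (N + Suc k)}"
        using Rt_speed[of \<psi> R \<omega> "x (N + k)" "x (N + Suc k)", OF a Rs ray_TV[OF r] ray_TV[OF r]] by simp
      then show "inverse (edge_speed (Rt \<psi> R) \<omega> {take k (wf m), take (Suc k) (wf m)}) = d (k + N)"
        unfolding d_def edge_step[OF r] by (simp add: add.commute)
    qed simp
    also have "\<dots> = ennreal (\<Sum>k<m - N. rr (k + N))" unfolding drr using rr0 by (simp add: sum_ennreal)
    also have "\<dots> \<le> ennreal t" using tail by (intro ennreal_leI) auto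
    finally show ?thesis using wTV by simp
  qed
  have inj: "inj_on wf {N..}"
  proof (rule inj_onI)
    fix m m' assume "m \<in> {N..}" "m' \<in> {N..}" "wf m = wf m'"
    then show "m = m'" using lw[of m] lw[of m'] by (metis atLeast_iff le_add_diff_inverse)
  qed
  have "infinite (wf ` {N..})" using inj infinite_Ici[of N] by (simp add: finite_image_iff)
  moreover have "wf ` {N..} \<subseteq> {y \<in> TV. drive_time (Rt \<psi> R) \<omega> troot y \<le> ennreal t}" using inball by auto
  ultimately have "infinite {y \<in> TV. drive_time (Rt \<psi> R) \<omega> troot y \<le> ennreal t}" using finite_subset by blast
  then show ?thesis using uTV unfolding \<psi>_def by blast
qed

theorem mainTheorem8:
  fixes M :: "'w measure" and Roads :: "'w \<Rightarrow> (nat list set \<times> real) set"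
    and \<mu> :: "nat list set measure" and \<beta> :: real
  assumes "\<beta> > 1"
    and "line_measure \<mu>"
    and "poisson_process M (road_intensity \<mu> \<beta>) Roads"
    and "\<forall>\<omega>\<in>space M. Roads \<omega> \<subseteq> lines \<times> {0<..}"
    and "\<exists>t>0. AE \<omega> in M. finite {x \<in> TV. drive_time Roads \<omega> troot x \<le> ennreal t}"
  shows "AE \<omega> in M. \<forall>x. root_ray x \<longrightarrow>
           (\<Sum>n. drive_time Roads \<omega> (x n) (x (Suc n))) = \<infinity>"
proof -
  note b = assms(1) and lm = assms(2) and pp = assms(3) and pos = assms(4)
  obtain t where t: "t > 0" and hyp: "AE \<omega> in M. finite {x \<in> TV. drive_time Roads \<omega> troot x \<le> ennreal t}"
    using assms(5) by blast
  have each: "AE \<omega> in M. finite {y \<in> TV. drive_time (Rt (phi (rev u)) Roads) \<omega> troot y \<le> ennreal t}"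
    if u: "u \<in> TV" for u
  proof -
    have a: "tree_aut (phi (rev u))" using TV_set[OF u] by (intro phi_aut) auto
    show ?thesis
      by (rule transfer[OF lm b pp Rt_pp[OF lm a pp] pos Rt_pos[OF pos a] hyp])
  qed
  have all: "AE \<omega> in M. \<forall>u\<in>TV. finite {y \<in> TV. drive_time (Rt (phi (rev u)) Roads) \<omega> troot y \<le> ennreal t}"
    using each by (subst AE_ball_countable) (auto intro: countable_subset[of _ UNIV])
  have spM: "AE \<omega> in M. \<omega> \<in> space M" by (rule AE_I2)
  show ?thesis using all spM
  proof eventually_elim
    case (elim \<omega>)
    show ?case
    proof (intro allI impI)
      fix x assume r: "root_ray x"
      have Rs: "Roads \<omega> \<subseteq> lines \<times> UNIV" using pos elim by auto
      show "(\<Sum>n. drive_time Roads \<omega> (x n) (x (Suc n))) = \<infinity>"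
      proof (rule ccontr)
        assume "(\<Sum>n. drive_time Roads \<omega> (x n) (x (Suc n))) \<noteq> \<infinity>"
        then obtain u where "u \<in> TV" "infinite {y \<in> TV. drive_time (Rt (phi (rev u)) Roads) \<omega> troot y \<le> ennreal t}"
          using ray_tail[of x Roads \<omega> t, OF r Rs t] by blast
        then show False using elim by blast
      qed
    qed
  qed
qed


end
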